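(* Let $w=a_{11}\cdots a_{1c_1}\,a_{21}\cdots a_{2c_2}\cdots a_{k1}\cdots a_{kc_k}$ be a column word with segments of lengths $c_1\ge c_2\ge\dots\ge c_k>0$. Then there exist positive integers $b_{ij}$ ($1\le i\le k$, $1\le j\le c_i$) such that $$w\sim^* b_{k1}b_{k-1,1}\cdots b_{11}b_{12}\cdots b_{1c_1}b_{22}\cdots b_{2c_2}\cdots b_{k2}\cdots b_{kc_k},$$ where $b_{11}>b_{21}>\dots>b_{k1}$ and $b_{11}\cdots b_{1c_1}\,|\,b_{22}\cdots b_{2c_2}\,|\cdots|\,b_{k2}\cdots b_{kc_k}$ is a column word (with segment lengths $c_1,c_2-1,\dots,c_k-1$, empty segments omitted).
   Context: A word is a finite sequence of positive integers. Twisted Knuth equivalence $\sim^*$ is the equivalence relation on words generated by: $u\,b\,a\,c\,v\sim^* u\,b\,c\,a\,v$ whenever $c\le b<a$, and $u\,a\,c\,b\,v\sim^* u\,c\,a\,b\,v$ whenever $c<b\le a$, for positive integers $a,b,c$ and arbitrary (possibly empty) words $u,v$. A column word is a word $a_{11}\cdots a_{1c_1}\,a_{21}\cdots a_{2c_2}\cdots a_{k1}\cdots a_{kc_k}$ (segments separated by $|$) with $c_1\ge c_2\ge\dots\ge c_k>0$ such that each segment is weakly decreasing ($a_{ij}\ge a_{i,j+1}$) and $a_{i+1,c_{i+1}-j}>a_{i,c_i-j}$ for all $0\le j<c_{i+1}$, $1\le i<k$. *)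

theory Defs
  imports Main
begin

type_synonym word = "nat list"

definition pos_word :: "word \<Rightarrow> bool" where
  "pos_word w \<longleftrightarrow> (\<forall>x\<in>set w. 0 < x)"

inductive twisted_step :: "word \<Rightarrow> word \<Rightarrow> bool" where
  tw1: "c \<le> b \<Longrightarrow> b < a \<Longrightarrow> twisted_step (u @ [b, a, c] @ v) (u @ [b, c, a] @ v)"
| tw2: "c < b \<Longrightarrow> b \<le> a \<Longrightarrow> twisted_step (u @ [a, c, b] @ v) (u @ [c, a, b] @ v)"

definition twisted_equiv :: "word \<Rightarrow> word \<Rightarrow> bool" where
  "twisted_equiv = (\<lambda>x y. twisted_step x y \<or> twisted_step y x)\<^sup>*\<^sup>*"

text \<open>A column word given by its list of segments [a_{i1},...,a_{ic_i}] (0-based indices).\<close>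
definition column_word :: "nat list list \<Rightarrow> bool" where
  "column_word cs \<longleftrightarrow>
     (\<forall>s\<in>set cs. s \<noteq> [] \<and> sorted_wrt (\<lambda>x y. x \<ge> y) s) \<and>
     (\<forall>i. Suc i < length cs \<longrightarrow> length (cs ! Suc i) \<le> length (cs ! i)) \<and>
     (\<forall>i j. Suc i < length cs \<and> j < length (cs ! Suc i) \<longrightarrow>
        cs ! Suc i ! (length (cs ! Suc i) - 1 - j) > cs ! i ! (length (cs ! i) - 1 - j))"

end

theory Submission imports Defs begin

lemma tw_refl: "twisted_equiv x x"
  unfolding twisted_equiv_def by simp

lemma tw_trans: "twisted_equiv x y \<Longrightarrow> twisted_equiv y z \<Longrightarrow> twisted_equiv x z"
  unfolding twisted_equiv_def by (rule rtranclp_trans)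

lemma tw_step1: "twisted_step x y \<Longrightarrow> twisted_equiv x y"
  unfolding twisted_equiv_def by auto

lemma tw_step2: "twisted_step y x \<Longrightarrow> twisted_equiv x y"
  unfolding twisted_equiv_def by auto

lemma step_cong: "twisted_step x y \<Longrightarrow> twisted_step (p @ x @ s) (p @ y @ s)"
proof (induction rule: twisted_step.induct)
  case (tw1 c b a u v)
  from twisted_step.tw1[OF tw1, of "p @ u" "v @ s"] show ?case by simp
next
  case (tw2 c b a u v)
  from twisted_step.tw2[OF tw2, of "p @ u" "v @ s"] show ?case by simp
qed

lemma tw_cong: "twisted_equiv x y \<Longrightarrow> twisted_equiv (p @ x @ s) (p @ y @ s)"
  unfolding twisted_equiv_def
proof (induction rule: rtranclp_induct)
  case base then show ?case by simp
next
  case (step y z)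
  then show ?case using step_cong
    by (metis (no_types, lifting) rtranclp.rtrancl_into_rtrancl)
qed

lemma step_set: "twisted_step x y \<Longrightarrow> set x = set y"
  by (induction rule: twisted_step.induct) auto

lemma tw_set: "twisted_equiv x y \<Longrightarrow> set x = set y"
  unfolding twisted_equiv_def
proof (induction rule: rtranclp_induct)
  case base then show ?case by simp
next
  case (step y z) then show ?case using step_set by metis
qed

lemma L1: "sorted_wrt (\<lambda>x y. x \<ge> y) (b # B) \<Longrightarrow> b < u \<Longrightarrow>
   twisted_equiv (b # B @ [u]) (b # u # B)"
proof (induction B arbitrary: b)
  case Nil then show ?case by (simp add: tw_refl)
next
  case (Cons c B)
  have "twisted_equiv (c # B @ [u]) (c # u # B)"
    using Cons by auto
  then have 1: "twisted_equiv (b # c # B @ [u]) (b # c # u # B)"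
    using tw_cong[of _ _ "[b]" "[]"] by simp
  have "twisted_step ([] @ [b, u, c] @ B) ([] @ [b, c, u] @ B)"
    by (rule twisted_step.tw1) (use Cons in auto)
  then have 2: "twisted_equiv (b # c # u # B) (b # u # c # B)"
    by (intro tw_step2) simp
  show ?case using tw_trans[OF 1 2] by simp
qed

lemma L2: "sorted_wrt (\<lambda>x y. x \<ge> y) A \<Longrightarrow> \<forall>a\<in>set A. v \<le> a \<Longrightarrow> z < v \<Longrightarrow>
   twisted_equiv (A @ [z, v]) (z # A @ [v])"
proof (induction A arbitrary: v rule: rev_induct)
  case Nil then show ?case by (simp add: tw_refl)
next
  case (snoc a A)
  have "twisted_step (A @ [a, z, v] @ []) (A @ [z, a, v] @ [])"
    by (rule twisted_step.tw2) (use snoc in auto)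
  then have 1: "twisted_equiv ((A @ [a]) @ [z, v]) ((A @ [z, a]) @ [v])"
    by (intro tw_step1) simp
  have "twisted_equiv (A @ [z, a]) (z # A @ [a])"
    using snoc by (auto simp: sorted_wrt_append)
  then have 2: "twisted_equiv ((A @ [z, a]) @ [v]) ((z # A @ [a]) @ [v])"
    using tw_cong[of _ _ "[]" "[v]"] by (metis append_Nil)
  show ?case using tw_trans[OF 1 2] by simp
qed


definition bpos :: "nat \<Rightarrow> nat list \<Rightarrow> nat" where
  "bpos u X = length (takeWhile (\<lambda>x. u \<le> x) X)"

abbreviation dec :: "nat list \<Rightarrow> bool" where
  "dec X \<equiv> sorted_wrt (\<lambda>x y. x \<ge> y) X"

lemma dec_nth: "dec X \<Longrightarrow> i \<le> j \<Longrightarrow> j < length X \<Longrightarrow> X ! j \<le> X ! i"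
  by (metis le_less order.refl sorted_wrt_iff_nth_less)

lemma last_min: "X \<noteq> [] \<Longrightarrow> dec X \<Longrightarrow> i < length X \<Longrightarrow> last X \<le> X ! i"
  by (simp add: dec_nth last_conv_nth)

lemma tw_less: assumes "\<exists>x\<in>set xs. \<not> P x" shows "length (takeWhile P xs) < length xs"
proof (rule ccontr)
  assume "\<not> ?thesis"
  then have "length (takeWhile P xs) = length xs" using length_takeWhile_le le_neq_implies_less by blast
  then have "takeWhile P xs = xs" by (metis takeWhile_eq_take take_all order.refl)
  then show False using assms by (metis set_takeWhileD)
qed

lemma bpos_lt: assumes "X \<noteq> []" "dec X" "last X < u" shows "bpos u X < length X"
proof -
  have "\<exists>x\<in>set X. \<not> u \<le> x" using assms by (metis last_in_set not_le)
  then show ?thesis unfolding bpos_def by (rule tw_less)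
qed

lemma bpos_val: assumes "X \<noteq> []" "dec X" "last X < u" shows "X ! bpos u X < u"
  using nth_length_takeWhile[OF bpos_lt[OF assms, unfolded bpos_def]] unfolding bpos_def by simp

lemma bpos_before: "i < bpos u X \<Longrightarrow> u \<le> X ! i"
  unfolding bpos_def by (metis nth_mem set_takeWhileD takeWhile_nth)

lemma bpos_max: assumes "X \<noteq> []" "dec X" "last X < u" "i < length X" "X ! i < u"
  shows "X ! i \<le> X ! bpos u X"
proof -
  have "\<not> i < bpos u X" using bpos_before assms(5) by (metis not_le)
  then show ?thesis using dec_nth[OF assms(2)] assms(4) by simp
qed

lemma ins_word: assumes "X \<noteq> []" "dec X" "last X < u"
  shows "twisted_equiv (X @ [u]) (X ! bpos u X # X[bpos u X := u])"
proof -
  define p where "p = bpos u X"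
  have pl: "p < length X" using bpos_lt[OF assms] p_def by simp
  define A where "A = take p X"
  define z where "z = X ! p"
  define B where "B = drop (Suc p) X"
  have X: "X = A @ z # B" unfolding A_def z_def B_def using pl by (simp add: id_take_nth_drop)
  have X': "X[p := u] = A @ u # B" unfolding A_def B_def using pl by (simp add: upd_conv_take_nth_drop)
  have zu: "z < u" using bpos_val[OF assms] p_def z_def by simp
  have sB: "dec (z # B)" using assms(2) X by (simp add: sorted_wrt_append)
  have sA: "dec A" using assms(2) X by (simp add: sorted_wrt_append)
  have Au: "\<forall>a\<in>set A. u \<le> a"
  proof
    fix a assume "a \<in> set A"
    then obtain i where "i < length A" "a = A ! i" by (metis in_set_conv_nth)
    then show "u \<le> a" unfolding A_def using bpos_before p_def by auto
  qed
  have 1: "twisted_equiv (A @ (z # B @ [u]) @ []) (A @ (z # u # B) @ [])"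
    by (rule tw_cong, rule L1) (use sB zu in auto)
  have 2: "twisted_equiv ([] @ (A @ [z, u]) @ B) ([] @ (z # A @ [u]) @ B)"
    by (rule tw_cong, rule L2) (use sA Au zu in auto)
  have h1: "twisted_equiv (X @ [u]) (A @ z # u # B)" using 1 X by simp
  have h2: "twisted_equiv (A @ z # u # B) (z # A @ u # B)" using 2 by simp
  have "twisted_equiv (X @ [u]) (z # A @ u # B)"
    using tw_trans[OF h1 h2] .
  then show ?thesis using X' z_def p_def by simp
qed

fun insseq :: "nat list \<Rightarrow> nat list \<Rightarrow> nat list \<times> nat list" where
  "insseq X [] = ([], X)"
| "insseq X (u # us) = (let r = insseq (X[bpos u X := u]) us in (X ! bpos u X # fst r, snd r))"

definition pre :: "nat list \<Rightarrow> nat list \<Rightarrow> bool" where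
  "pre X us \<longleftrightarrow> X \<noteq> [] \<and> dec X \<and> sorted_wrt (<) us \<and> (\<forall>u\<in>set us. last X < u)"

lemma ins_dec: assumes "X \<noteq> []" "dec X" "last X < u"
  shows "dec (X[bpos u X := u])"
proof -
  define p where "p = bpos u X"
  have pl: "p < length X" using bpos_lt[OF assms] p_def by simp
  have zu: "X ! p < u" using bpos_val[OF assms] p_def by simp
  show ?thesis unfolding sorted_wrt_iff_nth_less p_def[symmetric]
  proof (intro allI impI)
    fix i j assume ij: "i < j" "j < length (X[p := u])"
    show "X[p := u] ! j \<le> X[p := u] ! i"
    proof (cases "i = p")
      case True then show ?thesis using ij zu dec_nth[OF assms(2), of p j] by (auto simp: nth_list_update)
    next
      case False
      show ?thesis
      proof (cases "j = p")
        case True then show ?thesis using ij False bpos_before p_def by (auto simp: nth_list_update)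
      next
        case False2: False
        then show ?thesis using False ij dec_nth[OF assms(2), of i j] by (auto simp: nth_list_update)
      qed
    qed
  qed
qed

lemma pre_step: assumes "pre X (u # us)"
  shows "pre (X[bpos u X := u]) us"
proof -
  have a: "X \<noteq> []" "dec X" "last X < u" using assms unfolding pre_def by auto
  define p where "p = bpos u X"
  have pl: "p < length X" using bpos_lt[OF a] p_def by simp
  have "last (X[p := u]) < u'" if "u' \<in> set us" for u'
  proof -
    have uu: "u < u'" "last X < u'" using assms that unfolding pre_def by auto
    have "last (X[p := u]) = X[p:=u] ! (length X - 1)" using a(1) by (simp add: last_conv_nth)
    then show ?thesis using uu a(1) by (cases "p = length X - 1") (auto simp: last_conv_nth nth_list_update pl)
  qed
  then show ?thesis using assms ins_dec[OF a] a(1) unfolding pre_def p_def by auto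
qed

lemma S_len: "length (snd (insseq X us)) = length X"
  by (induction us arbitrary: X) (auto simp: Let_def)

lemma S_lenz: "length (fst (insseq X us)) = length us"
  by (induction us arbitrary: X) (auto simp: Let_def)

lemma S_word: "pre X us \<Longrightarrow> twisted_equiv (X @ us) (fst (insseq X us) @ snd (insseq X us))"
proof (induction us arbitrary: X)
  case Nil then show ?case by (simp add: tw_refl)
next
  case (Cons u us)
  have a: "X \<noteq> []" "dec X" "last X < u" using Cons.prems unfolding pre_def by auto
  have 1: "twisted_equiv ([] @ (X @ [u]) @ us) ([] @ (X ! bpos u X # X[bpos u X := u]) @ us)"
    by (rule tw_cong, rule ins_word[OF a])
  have 2: "twisted_equiv ([X ! bpos u X] @ (X[bpos u X := u] @ us) @ [])
     ([X ! bpos u X] @ (fst (insseq (X[bpos u X := u]) us) @ snd (insseq (X[bpos u X := u]) us)) @ [])"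
    by (rule tw_cong, rule Cons.IH, rule pre_step[OF Cons.prems])
  have h1: "twisted_equiv (X @ u # us) (X ! bpos u X # X[bpos u X := u] @ us)" using 1 by simp
  have h2: "twisted_equiv (X ! bpos u X # X[bpos u X := u] @ us) (X ! bpos u X # fst (insseq (X[bpos u X := u]) us) @ snd (insseq (X[bpos u X := u]) us))" using 2 by simp
  show ?case using tw_trans[OF h1 h2] by (simp add: Let_def)
qed

lemma S_dec: "pre X us \<Longrightarrow> dec (snd (insseq X us))"
proof (induction us arbitrary: X)
  case Nil then show ?case by (simp add: pre_def)
next
  case (Cons u us)
  then show ?case using pre_step[OF Cons.prems] by (simp add: Let_def)
qed

lemma S_mono: "pre X us \<Longrightarrow> i < length X \<Longrightarrow> X ! i \<le> snd (insseq X us) ! i"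
proof (induction us arbitrary: X)
  case Nil then show ?case by simp
next
  case (Cons u us)
  have a: "X \<noteq> []" "dec X" "last X < u" using Cons.prems unfolding pre_def by auto
  have "X ! i \<le> X[bpos u X := u] ! i"
    using bpos_val[OF a] Cons.prems(2) by (cases "i = bpos u X") (auto simp: nth_list_update)
  also have "\<dots> \<le> snd (insseq (X[bpos u X := u]) us) ! i"
    using Cons.IH[OF pre_step[OF Cons.prems(1)]] Cons.prems(2) by simp
  finally show ?case by (simp add: Let_def)
qed

lemma S_hd: "pre X us \<Longrightarrow> u \<in> set us \<Longrightarrow> u \<le> snd (insseq X us) ! 0"
proof (induction us arbitrary: X)
  case Nil then show ?case by simp
next
  case (Cons v us)
  have a: "X \<noteq> []" "dec X" "last X < v" using Cons.prems unfolding pre_def by auto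
  define X' where "X' = X[bpos v X := v]"
  have pl: "bpos v X < length X" using bpos_lt[OF a] .
  have pre': "pre X' us" using pre_step[OF Cons.prems(1)] X'_def by simp
  have "v \<le> snd (insseq X' us) ! 0"
  proof -
    have "v = X' ! bpos v X" using pl X'_def by simp
    also have "\<dots> \<le> X' ! 0" using dec_nth[of X' 0 "bpos v X"] pre' pl X'_def unfolding pre_def by simp
    also have "\<dots> \<le> snd (insseq X' us) ! 0" using S_mono[OF pre', of 0] pl X'_def a(1) by simp
    finally show ?thesis .
  qed
  then show ?case using Cons.IH[OF pre'] Cons.prems(2) X'_def by (auto simp: Let_def)
qed

lemma S_zlt: "pre X us \<Longrightarrow> z \<in> set (fst (insseq X us)) \<Longrightarrow> z < snd (insseq X us) ! 0"
proof (induction us arbitrary: X)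
  case Nil then show ?case by simp
next
  case (Cons v us)
  have a: "X \<noteq> []" "dec X" "last X < v" using Cons.prems unfolding pre_def by auto
  define X' where "X' = X[bpos v X := v]"
  have pre': "pre X' us" using pre_step[OF Cons.prems(1)] X'_def by simp
  have "X ! bpos v X < snd (insseq X' us) ! 0"
    using bpos_val[OF a] S_hd[OF Cons.prems(1), of v] X'_def by (simp add: Let_def)
  then show ?case using Cons.IH[OF pre'] Cons.prems(2) X'_def by (auto simp: Let_def)
qed

lemma S_zge: "pre X us \<Longrightarrow> x \<in> set X \<Longrightarrow> v \<le> x \<Longrightarrow> (\<forall>u\<in>set us. x < u) \<Longrightarrow>
   z \<in> set (fst (insseq X us)) \<Longrightarrow> v \<le> z"
proof (induction us arbitrary: X x z)
  case Nil then show ?case by simp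
next
  case (Cons u us)
  have a: "X \<noteq> []" "dec X" "last X < u" using Cons.prems unfolding pre_def by auto
  define X' where "X' = X[bpos u X := u]"
  have pl: "bpos u X < length X" using bpos_lt[OF a] .
  have pre': "pre X' us" using pre_step[OF Cons.prems(1)] X'_def by simp
  have z1: "v \<le> X ! bpos u X"
  proof -
    obtain i where "i < length X" "x = X ! i" using Cons.prems(2) by (metis in_set_conv_nth)
    then show ?thesis using bpos_max[OF a, of i] Cons.prems(3,4) by auto
  qed
  have rest: "v \<le> z'" if "z' \<in> set (fst (insseq X' us))" for z'
  proof -
    have uX: "u \<in> set X'" using pl X'_def by (simp add: set_update_memI)
    have vu: "v \<le> u" using Cons.prems(3,4) by force
    have uw: "\<forall>w\<in>set us. u < w" using Cons.prems(1) unfolding pre_def by simp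
    show ?thesis by (rule Cons.IH[OF pre' uX vu uw that])
  qed
  show ?case using Cons.prems(5) z1 rest X'_def by (auto simp: Let_def)
qed

lemma S_zsorted: "pre X us \<Longrightarrow> sorted_wrt (<) (fst (insseq X us))"
proof (induction us arbitrary: X)
  case Nil then show ?case by simp
next
  case (Cons u us)
  have a: "X \<noteq> []" "dec X" "last X < u" using Cons.prems unfolding pre_def by auto
  define X' where "X' = X[bpos u X := u]"
  have pl: "bpos u X < length X" using bpos_lt[OF a] .
  have pre': "pre X' us" using pre_step[OF Cons.prems(1)] X'_def by simp
  have "X ! bpos u X < z" if "z \<in> set (fst (insseq X' us))" for z
  proof -
    have "u \<le> z"
      by (rule S_zge[OF pre', of u]) (use pl X'_def Cons.prems(1) that in \<open>auto simp: pre_def set_update_memI\<close>)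
    then show ?thesis using bpos_val[OF a] by simp
  qed
  then show ?case using Cons.IH[OF pre'] X'_def by (auto simp: Let_def)
qed


lemma S_P6: "pre X us \<Longrightarrow> (\<forall>i<length X. C ! i \<le> X ! i) \<Longrightarrow> dec C \<Longrightarrow> length C = length X \<Longrightarrow>
  z \<in> set (fst (insseq X us)) \<Longrightarrow> 1 \<le> s \<Longrightarrow> s < length X \<Longrightarrow> snd (insseq X us) ! s \<le> z \<Longrightarrow>
  C ! (s - 1) \<le> z"
proof (induction us arbitrary: X z)
  case Nil then show ?case by simp
next
  case (Cons u us)
  have a: "X \<noteq> []" "dec X" "last X < u" using Cons.prems unfolding pre_def by auto
  define X' where "X' = X[bpos u X := u]"
  define p where "p = bpos u X"
  have pl: "p < length X" using bpos_lt[OF a] p_def by simp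
  have pre': "pre X' us" using pre_step[OF Cons.prems(1)] X'_def by simp
  have zu: "X ! p < u" using bpos_val[OF a] p_def by simp
  have lenX': "length X' = length X" using X'_def by simp
  have CX': "\<forall>i<length X'. C ! i \<le> X' ! i"
  proof (intro allI impI)
    fix i assume i: "i < length X'"
    show "C ! i \<le> X' ! i"
    proof (cases "i = p")
      case True
      then have "C ! i \<le> X ! p" using Cons.prems(2) pl by simp
      then show ?thesis using True zu X'_def p_def pl by simp
    next
      case False
      then show ?thesis using Cons.prems(2) i lenX' X'_def p_def by simp
    qed
  qed
  show ?case
  proof (cases "z = X ! p")
    case True
    show ?thesis
    proof (cases "s \<le> p")
      case True
      have "u = X' ! p" using X'_def p_def pl by simp
      also have "\<dots> \<le> X' ! s" using dec_nth[of X' s p] pre' pl lenX' True unfolding pre_def by simp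
      also have "\<dots> \<le> snd (insseq X' us) ! s" using S_mono[OF pre', of s] Cons.prems(7) lenX' by simp
      finally have "u \<le> snd (insseq X (u # us)) ! s" using X'_def by (simp add: Let_def)
      then show ?thesis using Cons.prems(8) \<open>z = X ! p\<close> zu by simp
    next
      case False
      have "C ! (s - 1) \<le> C ! p" using dec_nth[OF Cons.prems(3), of p "s - 1"] False Cons.prems(4,7) by simp
      also have "\<dots> \<le> X ! p" using Cons.prems(2) pl by simp
      finally show ?thesis using \<open>z = X ! p\<close> by simp
    qed
  next
    case False
    then have zin: "z \<in> set (fst (insseq X' us))" using Cons.prems(5) X'_def p_def by (simp add: Let_def)
    have "snd (insseq X' us) ! s \<le> z" using Cons.prems(8) X'_def by (simp add: Let_def)
    then show ?thesis
      using Cons.IH[OF pre' CX' Cons.prems(3)] lenX' Cons.prems(4,6,7) zin by simp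
  qed
qed

lemma S_J: "pre X us \<Longrightarrow> length C = length X \<Longrightarrow>
  (\<forall>q<length X. X ! q = C ! q \<or> (\<forall>u\<in>set us. X ! q < u)) \<Longrightarrow>
  (\<forall>s. 1 \<le> s \<longrightarrow> s < c2 \<longrightarrow> s + d < length X \<longrightarrow> X ! (s + d) < D ! s) \<Longrightarrow>
  (\<forall>u\<in>set us. \<forall>s. 1 \<le> s \<longrightarrow> s < c2 \<longrightarrow> s + d < length X \<longrightarrow> u \<le> C ! (s - 1 + d) \<longrightarrow> u < D ! s) \<Longrightarrow>
  1 \<le> s \<Longrightarrow> s < c2 \<Longrightarrow> s + d < length X \<Longrightarrow> snd (insseq X us) ! (s + d) < D ! s"
proof (induction us arbitrary: X s)
  case Nil then show ?case by simp
next
  case (Cons u us)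
  have a: "X \<noteq> []" "dec X" "last X < u" using Cons.prems unfolding pre_def by auto
  define X' where "X' = X[bpos u X := u]"
  define p where "p = bpos u X"
  have pl: "p < length X" using bpos_lt[OF a] p_def by simp
  have pre': "pre X' us" using pre_step[OF Cons.prems(1)] X'_def by simp
  have lenX': "length X' = length X" using X'_def by simp
  have uus: "\<forall>w\<in>set us. u < w" using Cons.prems(1) unfolding pre_def by simp
  have K': "\<forall>q<length X'. X' ! q = C ! q \<or> (\<forall>w\<in>set us. X' ! q < w)"
  proof (intro allI impI)
    fix q assume "q < length X'"
    then show "X' ! q = C ! q \<or> (\<forall>w\<in>set us. X' ! q < w)"
      using Cons.prems(3) uus X'_def p_def by (cases "q = p") (auto simp: nth_list_update)
  qed
  have J': "\<forall>s. 1 \<le> s \<longrightarrow> s < c2 \<longrightarrow> s + d < length X' \<longrightarrow> X' ! (s + d) < D ! s"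
  proof (intro allI impI)
    fix t assume t: "1 \<le> t" "t < c2" "t + d < length X'"
    show "X' ! (t + d) < D ! t"
    proof (cases "t + d = p")
      case True
      have pm: "p - 1 < bpos u X" using True t(1) p_def by simp
      have "u \<le> X ! (p - 1)" using bpos_before[OF pm] .
      moreover have "X ! (p - 1) = C ! (p - 1) \<or> X ! (p - 1) < u"
      proof -
        have "p - 1 < length X" using pl by simp
        from Cons.prems(3)[rule_format, OF this] show ?thesis by auto
      qed
      ultimately have "u \<le> C ! (t - 1 + d)" using True t(1) by (metis add.commute add_diff_assoc2 not_le)
      then have "u < D ! t" using Cons.prems(5) t lenX' by simp
      then show ?thesis using True X'_def p_def pl by simp
    next
      case False
      then show ?thesis using Cons.prems(4) t lenX' X'_def p_def by simp
    qed
  qed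
  have Q': "\<forall>w\<in>set us. \<forall>s. 1 \<le> s \<longrightarrow> s < c2 \<longrightarrow> s + d < length X' \<longrightarrow> w \<le> C ! (s - 1 + d) \<longrightarrow> w < D ! s"
    using Cons.prems(5) lenX' by simp
  have "snd (insseq X' us) ! (s + d) < D ! s"
    using Cons.IH[OF pre' _ K' J' Q'] Cons.prems(2,6,7,8) lenX' by simp
  then show ?case using X'_def by (simp add: Let_def)
qed


definition colrel :: "nat list \<Rightarrow> nat list \<Rightarrow> bool" where
  "colrel A B \<longleftrightarrow> length B \<le> length A \<and>
     (\<forall>j<length B. A ! (length A - 1 - j) < B ! (length B - 1 - j))"

lemma cw_single: "column_word [A] \<longleftrightarrow> A \<noteq> [] \<and> dec A"
  unfolding column_word_def by simp

lemma cw_cons2: "column_word (A # B # F) \<longleftrightarrow> A \<noteq> [] \<and> dec A \<and> colrel A B \<and> column_word (B # F)"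
proof
  assume H: "column_word (A # B # F)"
  let ?L = "A # B # F"
  have s1: "\<forall>s\<in>set ?L. s \<noteq> [] \<and> dec s" using H unfolding column_word_def by blast
  have s2: "\<And>i. Suc i < length ?L \<Longrightarrow> length (?L ! Suc i) \<le> length (?L ! i)"
    using H unfolding column_word_def by blast
  have s3: "\<And>i j. Suc i < length ?L \<Longrightarrow> j < length (?L ! Suc i) \<Longrightarrow>
        ?L ! Suc i ! (length (?L ! Suc i) - 1 - j) > ?L ! i ! (length (?L ! i) - 1 - j)"
    using H unfolding column_word_def by blast
  have "colrel A B" unfolding colrel_def using s2[of 0] s3[of 0] by auto
  moreover have "column_word (B # F)" unfolding column_word_def
  proof (intro conjI allI impI)
    show "\<forall>s\<in>set (B # F). s \<noteq> [] \<and> dec s" using s1 by simp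
  next
    fix i assume "Suc i < length (B # F)"
    then show "length ((B # F) ! Suc i) \<le> length ((B # F) ! i)" using s2[of "Suc i"] by simp
  next
    fix i j assume "Suc i < length (B # F) \<and> j < length ((B # F) ! Suc i)"
    then show "(B # F) ! i ! (length ((B # F) ! i) - 1 - j) < (B # F) ! Suc i ! (length ((B # F) ! Suc i) - 1 - j)"
      using s3[of "Suc i" j] by simp
  qed
  ultimately show "A \<noteq> [] \<and> dec A \<and> colrel A B \<and> column_word (B # F)" using s1 by simp
next
  assume H: "A \<noteq> [] \<and> dec A \<and> colrel A B \<and> column_word (B # F)"
  let ?L = "A # B # F"
  have c: "colrel A B" "column_word (B # F)" using H by auto
  have t1: "\<forall>s\<in>set (B # F). s \<noteq> [] \<and> dec s" using c(2) unfolding column_word_def by blast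
  have t2: "\<And>i. Suc i < length (B # F) \<Longrightarrow> length ((B # F) ! Suc i) \<le> length ((B # F) ! i)"
    using c(2) unfolding column_word_def by blast
  have t3: "\<And>i j. Suc i < length (B # F) \<Longrightarrow> j < length ((B # F) ! Suc i) \<Longrightarrow>
        (B # F) ! Suc i ! (length ((B # F) ! Suc i) - 1 - j) > (B # F) ! i ! (length ((B # F) ! i) - 1 - j)"
    using c(2) unfolding column_word_def by blast
  show "column_word ?L" unfolding column_word_def
  proof (intro conjI allI impI)
    show "\<forall>s\<in>set ?L. s \<noteq> [] \<and> dec s" using t1 H by simp
  next
    fix i assume i: "Suc i < length ?L"
    show "length (?L ! Suc i) \<le> length (?L ! i)"
    proof (cases i)
      case 0 then show ?thesis using c(1) unfolding colrel_def by simp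
    next
      case (Suc k) then show ?thesis using t2[of k] i by simp
    qed
  next
    fix i j assume ij: "Suc i < length ?L \<and> j < length (?L ! Suc i)"
    show "?L ! i ! (length (?L ! i) - 1 - j) < ?L ! Suc i ! (length (?L ! Suc i) - 1 - j)"
    proof (cases i)
      case 0 then show ?thesis using c(1) ij unfolding colrel_def by simp
    next
      case (Suc k) then show ?thesis using t3[of k j] ij by simp
    qed
  qed
qed

lemma cw_tail: "column_word (A # F) \<Longrightarrow> column_word F"
  by (cases F) (simp add: column_word_def, simp add: cw_cons2)

lemma cw_hd: "column_word (A # F) \<Longrightarrow> A \<noteq> [] \<and> dec A"
  by (cases F) (auto simp: cw_cons2 cw_single)

lemma cw_len: "column_word (A # F) \<Longrightarrow> B \<in> set F \<Longrightarrow> length B \<le> length A"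
proof (induction F arbitrary: A)
  case Nil then show ?case by simp
next
  case (Cons C F)
  have "colrel A C" "column_word (C # F)" using Cons.prems(1) by (auto simp: cw_cons2)
  then show ?case using Cons unfolding colrel_def by force
qed

lemma cw_last: "column_word (A # F) \<Longrightarrow> x \<in> set (concat F) \<Longrightarrow> last A < x"
proof (induction F arbitrary: A)
  case Nil then show ?case by simp
next
  case (Cons B F)
  have h: "A \<noteq> []" "colrel A B" "column_word (B # F)" using Cons.prems(1) by (auto simp: cw_cons2)
  have hB: "B \<noteq> []" "dec B" using cw_hd[OF h(3)] by auto
  have lBA: "last A < last B"
    using h(2) hB h(1) unfolding colrel_def by (auto simp: last_conv_nth)
  show ?case
  proof (cases "x \<in> set B")
    case True
    then obtain i where "i < length B" "x = B ! i" by (metis in_set_conv_nth)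
    then have "last B \<le> x" using last_min[OF hB] by simp
    then show ?thesis using lBA by simp
  next
    case False
    then have "x \<in> set (concat F)" using Cons.prems(2) by simp
    then show ?thesis using Cons.IH[OF h(3)] lBA by simp
  qed
qed

lemma colrel_tl: assumes "colrel D G" "length G < length D" shows "colrel (tl D) G"
  unfolding colrel_def
proof (intro conjI allI impI)
  show "length G \<le> length (tl D)" using assms(2) by simp
next
  fix j assume j: "j < length G"
  have e: "Suc (length (tl D) - 1 - j) = length D - 1 - j" using j assms(2) by simp
  have k: "length (tl D) - 1 - j < length (tl D)" using j assms(2) by simp
  have "tl D ! (length (tl D) - 1 - j) = D ! (length D - 1 - j)" using nth_tl[OF k] e by simp
  then show "tl D ! (length (tl D) - 1 - j) < G ! (length G - 1 - j)"
    using assms(1) j unfolding colrel_def by simp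
qed


lemma map2_Cons: "length xs = length ys \<Longrightarrow>
   map hd (map2 (#) xs ys) = xs \<and> map tl (map2 (#) xs ys) = ys \<and> map length (map2 (#) xs ys) = map (\<lambda>t. Suc (length t)) ys"
proof (induction xs arbitrary: ys)
  case Nil then show ?case by simp
next
  case (Cons x xs) then show ?case by (cases ys) auto
qed

lemma ne_from_len: "map length xs = map length ys \<Longrightarrow> \<forall>y\<in>set ys. y \<noteq> [] \<Longrightarrow> x \<in> set xs \<Longrightarrow> x \<noteq> []"
proof -
  assume a: "map length xs = map length ys" "\<forall>y\<in>set ys. y \<noteq> []" "x \<in> set xs"
  then have "length x \<in> set (map length ys)" by (metis image_eqI list.set_map)
  then obtain y where "y \<in> set ys" "length y = length x" by auto
  then show "x \<noteq> []" using a(2) by auto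
qed

lemma len_from_len: "map length xs = map length ys \<Longrightarrow> x \<in> set xs \<Longrightarrow> \<exists>y\<in>set ys. length y = length x"
proof -
  assume a: "map length xs = map length ys" "x \<in> set xs"
  then have "length x \<in> set (map length ys)" by (metis image_eqI list.set_map)
  then show ?thesis by auto
qed

lemma main:
  "cs \<noteq> [] \<Longrightarrow> column_word cs \<Longrightarrow> \<exists>bs. map length bs = map length cs \<and>
     sorted_wrt (\<lambda>x y. x > y) (map hd bs) \<and>
     column_word (hd bs # filter (\<lambda>s. s \<noteq> []) (map tl (tl bs))) \<and>
     twisted_equiv (concat cs) (rev (map hd (tl bs)) @ hd bs @ concat (map tl (tl bs))) \<and>
     (\<forall>i<length (hd cs). hd cs ! i \<le> hd bs ! i) \<and>
     (\<forall>h\<in>set (map hd (tl bs)). \<forall>s. 1 \<le> s \<longrightarrow> s < length (hd cs) \<longrightarrow> hd bs ! s \<le> h \<longrightarrow> hd cs ! (s - 1) \<le> h)"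
proof (induction cs)
  case Nil then show ?case by simp
next
  case (Cons C1 cs2)
  show ?case
  proof (cases "cs2 = []")
    case True
    show ?thesis
      by (rule exI[of _ "[C1]"]) (use Cons.prems True in \<open>auto simp: tw_refl\<close>)
  next
    case False
    have cw2: "column_word cs2" using cw_tail Cons.prems(2) by blast
    obtain bs2 where B1: "map length bs2 = map length cs2"
      and B2: "sorted_wrt (\<lambda>x y. x > y) (map hd bs2)"
      and B3: "column_word (hd bs2 # filter (\<lambda>s. s \<noteq> []) (map tl (tl bs2)))"
      and B4: "twisted_equiv (concat cs2) (rev (map hd (tl bs2)) @ hd bs2 @ concat (map tl (tl bs2)))"
      and B5: "\<forall>i<length (hd cs2). hd cs2 ! i \<le> hd bs2 ! i"
      and B6: "\<forall>h\<in>set (map hd (tl bs2)). \<forall>s. 1 \<le> s \<longrightarrow> s < length (hd cs2) \<longrightarrow> hd bs2 ! s \<le> h \<longrightarrow> hd cs2 ! (s - 1) \<le> h"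
      using Cons.IH[OF False cw2] by blast
    obtain C2 cs3 where cs2: "cs2 = C2 # cs3" using False by (cases cs2) auto
    have cwC: "C1 \<noteq> []" "dec C1" "colrel C1 C2" "column_word (C2 # cs3)"
      using Cons.prems(2) cs2 by (auto simp: cw_cons2)
    have C2ne: "C2 \<noteq> []" "dec C2" using cw_hd[OF cwC(4)] by auto
    obtain D2 bt where bs2: "bs2 = D2 # bt" using B1 cs2 by (cases bs2) auto
    have lenD2: "length D2 = length C2" and lenbt: "map length bt = map length cs3" using B1 cs2 bs2 by auto
    have D2ne: "D2 \<noteq> []" using lenD2 C2ne by auto
    have cs_ne0: "\<forall>s\<in>set (C2 # cs3). s \<noteq> [] \<and> dec s" using cwC(4) unfolding column_word_def by blast
    have cs_ne: "\<forall>c\<in>set cs3. c \<noteq> []" using cs_ne0 by simp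
    have bt_ne: "\<forall>b\<in>set bt. b \<noteq> []" using ne_from_len[OF lenbt cs_ne] by blast
    have bt_len: "\<forall>b\<in>set bt. length b \<le> length D2"
    proof
      fix b assume "b \<in> set bt"
      then obtain c where "c \<in> set cs3" "length c = length b" using len_from_len[OF lenbt] by blast
      then show "length b \<le> length D2" using cw_len[OF cwC(4)] lenD2 by metis
    qed
    define c1 where "c1 = length C1"
    define c2 where "c2 = length C2"
    have c21: "c2 \<le> c1" using cwC(3) unfolding colrel_def c1_def c2_def by simp
    have c2pos: "0 < c2" using C2ne c2_def by simp
    have al: "\<And>j. j < c2 \<Longrightarrow> C1 ! (c1 - 1 - j) < C2 ! (c2 - 1 - j)"
      using cwC(3) unfolding colrel_def c1_def c2_def by blast
    define H2 where "H2 = rev (map hd bt)"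
    define y where "y = hd D2"
    define us where "us = H2 @ [y]"
    define R where "R = concat (map tl bt)"
    have B2': "sorted_wrt (\<lambda>x y. x > y) (y # map hd bt)" using B2 bs2 y_def by simp
    have us_sorted: "sorted_wrt (<) us"
      using B2' unfolding us_def H2_def by (auto simp: sorted_wrt_append sorted_wrt_rev)
    have T2: "set (concat cs2) = set (H2 @ D2 @ R)" using tw_set[OF B4] bs2 H2_def R_def by simp
    have us_gt: "\<forall>u\<in>set us. last C1 < u"
    proof
      fix u assume "u \<in> set us"
      then have "u \<in> set (H2 @ D2 @ R)" unfolding us_def y_def using D2ne by auto
      then have "u \<in> set (concat cs2)" using T2 by simp
      then show "last C1 < u" using cw_last[OF Cons.prems(2)] by simp
    qed
    have pre: "pre C1 us" unfolding pre_def using cwC us_sorted us_gt by simp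
    define zs where "zs = fst (insseq C1 us)"
    define Xf where "Xf = snd (insseq C1 us)"
    have lenzs: "length zs = length us" using S_lenz zs_def by simp
    have lenXf: "length Xf = length C1" using S_len Xf_def by simp
    have Xfne: "Xf \<noteq> []" using lenXf cwC(1) by auto
    have lenus: "length us = length bs2" unfolding us_def H2_def bs2 by simp
    have tlbs2: "map tl bs2 = tl D2 # map tl bt" using bs2 by simp
    define bs where "bs = Xf # map2 (#) (rev zs) (map tl bs2)"
    have m2: "map hd (tl bs) = rev zs" "map tl (tl bs) = map tl bs2"
       "map length (tl bs) = map (\<lambda>t. Suc (length t)) (map tl bs2)"
      using map2_Cons[of "rev zs" "map tl bs2"] lenzs lenus unfolding bs_def by auto
    have bs2_ne: "\<forall>b\<in>set bs2. b \<noteq> []" using bt_ne D2ne bs2 by simp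
    have G1: "map length bs = map length (C1 # cs2)"
    proof -
      have "map (\<lambda>t. Suc (length t)) (map tl bs2) = map length bs2"
        using bs2_ne by (induction bs2) auto
      then show ?thesis using m2(3) lenXf B1 unfolding bs_def by simp
    qed
    have G2: "sorted_wrt (\<lambda>x y. x > y) (map hd bs)"
    proof -
      have "\<forall>z\<in>set zs. z < hd Xf" using S_zlt[OF pre] Xfne unfolding zs_def Xf_def by (simp add: hd_conv_nth)
      moreover have "sorted_wrt (\<lambda>x y. x > y) (rev zs)" using S_zsorted[OF pre] zs_def by (simp add: sorted_wrt_rev)
      ultimately show ?thesis using m2(1) unfolding bs_def by simp
    qed
    have G4: "twisted_equiv (concat (C1 # cs2)) (rev (map hd (tl bs)) @ hd bs @ concat (map tl (tl bs)))"
    proof -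
      have D2e: "D2 = y # tl D2" using D2ne y_def by simp
      have e1: "twisted_equiv (C1 @ concat cs2 @ []) (C1 @ (H2 @ D2 @ R) @ [])"
        by (rule tw_cong) (use B4 bs2 H2_def R_def in simp)
      have eq: "C1 @ H2 @ D2 @ R = [] @ (C1 @ us) @ (tl D2 @ R)" unfolding us_def
        by (subst D2e) simp
      have e1'': "twisted_equiv (C1 @ concat cs2) (C1 @ H2 @ D2 @ R)" using e1 by simp
      have e1': "twisted_equiv (C1 @ concat cs2) ([] @ (C1 @ us) @ (tl D2 @ R))"
        using e1'' unfolding eq .
      have e2: "twisted_equiv ([] @ (C1 @ us) @ (tl D2 @ R)) ([] @ (zs @ Xf) @ (tl D2 @ R))"
        by (rule tw_cong) (use S_word[OF pre] zs_def Xf_def in simp)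
      have "rev (map hd (tl bs)) @ hd bs @ concat (map tl (tl bs)) = zs @ Xf @ tl D2 @ R"
        using m2 tlbs2 unfolding bs_def R_def by simp
      then show ?thesis using tw_trans[OF e1' e2] by simp
    qed
    have G5: "\<forall>i<length (hd (C1 # cs2)). hd (C1 # cs2) ! i \<le> hd bs ! i"
    proof (intro allI impI)
      fix i assume "i < length (hd (C1 # cs2))"
      then have "i < length C1" by simp
      from S_mono[OF pre this] show "hd (C1 # cs2) ! i \<le> hd bs ! i" unfolding bs_def Xf_def by simp
    qed
    have G6: "\<forall>h\<in>set (map hd (tl bs)). \<forall>s. 1 \<le> s \<longrightarrow> s < length (hd (C1 # cs2)) \<longrightarrow> hd bs ! s \<le> h \<longrightarrow> hd (C1 # cs2) ! (s - 1) \<le> h"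
    proof (intro ballI allI impI)
      fix h s assume h: "h \<in> set (map hd (tl bs))" and s: "1 \<le> s" "s < length (hd (C1 # cs2))" "hd bs ! s \<le> h"
      have hz: "h \<in> set (fst (insseq C1 us))" using h m2(1) zs_def by simp
      have s2: "s < length C1" using s(2) by simp
      have s3: "snd (insseq C1 us) ! s \<le> h" using s(3) unfolding bs_def Xf_def by simp
      have "C1 ! (s - 1) \<le> h" by (rule S_P6[OF pre _ cwC(2) refl hz s(1) s2 s3]) simp
      then show "hd (C1 # cs2) ! (s - 1) \<le> h" by simp
    qed
    have tails_len: "\<forall>t\<in>set (map tl bt). length t < length D2"
    proof
      fix t assume "t \<in> set (map tl bt)"
      then obtain b where "b \<in> set bt" "t = tl b" by auto
      then have "b \<noteq> []" "length b \<le> length D2" using bt_len bt_ne by auto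
      then show "length t < length D2" using \<open>t = tl b\<close> by (cases b) auto
    qed
    define F where "F = filter (\<lambda>s. s \<noteq> []) (map tl bt)"
    have B3': "column_word (D2 # F)" using B3 bs2 F_def by simp
    have G3: "column_word (hd bs # filter (\<lambda>s. s \<noteq> []) (map tl (tl bs)))"
    proof (cases "tl D2 = []")
      case True
      then have "length D2 = 1" using D2ne by (cases D2) auto
      then have "\<forall>t\<in>set (map tl bt). t = []" using tails_len by auto
      then have "F = []" unfolding F_def by (simp add: filter_empty_conv)
      then show ?thesis using m2(2) tlbs2 True S_dec[OF pre] Xfne unfolding bs_def F_def Xf_def
        by (simp add: cw_single)
    next
      case False
      have decD2: "dec D2" using cw_hd[OF B3'] by simp
      have dectl: "dec (tl D2)" using decD2 D2ne by (cases D2) auto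
      have cwtl: "column_word (tl D2 # F)"
      proof (cases F)
        case Nil then show ?thesis using False dectl by (simp add: cw_single)
      next
        case (Cons G F')
        have "colrel D2 G" "column_word (G # F')" using B3' Cons by (auto simp: cw_cons2)
        moreover have "length G < length D2" using tails_len Cons unfolding F_def
          by (metis filter_is_subset list.set_intros(1) subsetD)
        ultimately show ?thesis using Cons False dectl colrel_tl by (simp add: cw_cons2)
      qed
      have crel: "colrel Xf (tl D2)"
        unfolding colrel_def
      proof (intro conjI allI impI)
        show "length (tl D2) \<le> length Xf" using lenXf lenD2 c21 c1_def c2_def by simp
      next
        fix j assume j: "j < length (tl D2)"
        define s where "s = c2 - 1 - j"
        define d where "d = c1 - c2"
        have js: "1 \<le> s" "s < c2" "s + d < length C1" using j lenD2 c21 unfolding s_def d_def c1_def c2_def by auto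
        have J0: "\<forall>s. 1 \<le> s \<longrightarrow> s < c2 \<longrightarrow> s + d < length C1 \<longrightarrow> C1 ! (s + d) < D2 ! s"
        proof (intro allI impI)
          fix t assume t: "1 \<le> t" "t < c2" "t + d < length C1"
          have "C1 ! (c1 - 1 - (c2 - 1 - t)) < C2 ! (c2 - 1 - (c2 - 1 - t))"
            by (rule al) (use t in simp)
          moreover have "c1 - 1 - (c2 - 1 - t) = t + d" "c2 - 1 - (c2 - 1 - t) = t" using t c21 unfolding d_def by auto
          moreover have "C2 ! t \<le> D2 ! t" using B5 cs2 bs2 t c2_def by simp
          ultimately show "C1 ! (t + d) < D2 ! t" by simp
        qed
        have Q: "\<forall>u\<in>set us. \<forall>s. 1 \<le> s \<longrightarrow> s < c2 \<longrightarrow> s + d < length C1 \<longrightarrow> u \<le> C1 ! (s - 1 + d) \<longrightarrow> u < D2 ! s"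
        proof (intro ballI allI impI)
          fix u t assume u: "u \<in> set us" and t: "1 \<le> t" "t < c2" "t + d < length C1" "u \<le> C1 ! (t - 1 + d)"
          have "C1 ! (c1 - 1 - (c2 - t)) < C2 ! (c2 - 1 - (c2 - t))"
            by (rule al) (use t in simp)
          moreover have "c1 - 1 - (c2 - t) = t - 1 + d" "c2 - 1 - (c2 - t) = t - 1" using t c21 unfolding d_def by auto
          ultimately have uC: "u < C2 ! (t - 1)" using t(4) by simp
          show "u < D2 ! t"
          proof (cases "u = y")
            case True
            have "C2 ! (t - 1) \<le> C2 ! 0" using dec_nth[OF C2ne(2), of 0 "t - 1"] t c2_def by simp
            also have "\<dots> \<le> D2 ! 0" using B5 cs2 bs2 c2pos c2_def by simp
            also have "\<dots> = u" using True y_def D2ne by (simp add: hd_conv_nth)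
            finally show ?thesis using uC by simp
          next
            case False
            then have "u \<in> set (map hd (tl bs2))" using u bs2 unfolding us_def H2_def by simp
            then show ?thesis using B6 cs2 bs2 t uC c2_def by force
          qed
        qed
        have "Xf ! (s + d) < D2 ! s"
          using S_J[OF pre _ _ J0 Q js] unfolding Xf_def by simp
        moreover have "s + d = length Xf - 1 - j" using j lenXf lenD2 c21 unfolding s_def d_def c1_def c2_def by simp
        moreover have "tl D2 ! (length (tl D2) - 1 - j) = D2 ! s"
        proof -
          have k: "length (tl D2) - 1 - j < length (tl D2)" using j by simp
          have "Suc (length (tl D2) - 1 - j) = s" using j lenD2 unfolding s_def c2_def by simp
          then show ?thesis using nth_tl[OF k] by simp
        qed
        ultimately show "Xf ! (length Xf - 1 - j) < tl D2 ! (length (tl D2) - 1 - j)" by simp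
      qed
      have "column_word (Xf # tl D2 # F)"
        using Xfne S_dec[OF pre] crel cwtl unfolding Xf_def by (simp add: cw_cons2)
      then show ?thesis using m2(2) tlbs2 False unfolding bs_def F_def by simp
    qed
    show ?thesis
      by (rule exI[of _ bs], intro conjI, fact G1, fact G2, fact G3, fact G4, fact G5, fact G6)
  qed
qed


theorem lemma4p4:
  fixes cs :: "nat list list"
  assumes "cs \<noteq> []"
    and "column_word cs"
    and "pos_word (concat cs)"
  shows "\<exists>bs :: nat list list.
           map length bs = map length cs \<and>
           pos_word (concat bs) \<and>
           sorted_wrt (\<lambda>x y. x > y) (map hd bs) \<and>
           column_word (hd bs # filter (\<lambda>s. s \<noteq> []) (map tl (tl bs))) \<and>
           twisted_equiv (concat cs)
             (rev (map hd (tl bs)) @ hd bs @ concat (map tl (tl bs)))"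
proof -
  obtain bs where P1: "map length bs = map length cs"
    and P2: "sorted_wrt (\<lambda>x y. x > y) (map hd bs)"
    and P3: "column_word (hd bs # filter (\<lambda>s. s \<noteq> []) (map tl (tl bs)))"
    and P4: "twisted_equiv (concat cs) (rev (map hd (tl bs)) @ hd bs @ concat (map tl (tl bs)))"
    using main[OF assms(1,2)] by blast
  have cne: "\<forall>c\<in>set cs. c \<noteq> []" using assms(2) unfolding column_word_def by blast
  have bne: "\<forall>b\<in>set bs. b \<noteq> []" using ne_from_len[OF P1 cne] by blast
  obtain B bt where bs: "bs = B # bt" using P1 assms(1) by (cases bs) auto
  have sub: "set (concat bs) \<subseteq> set (rev (map hd (tl bs)) @ hd bs @ concat (map tl (tl bs)))"
  proof
    fix x assume "x \<in> set (concat bs)"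
    then obtain b where b: "b \<in> set bs" "x \<in> set b" by auto
    show "x \<in> set (rev (map hd (tl bs)) @ hd bs @ concat (map tl (tl bs)))"
    proof (cases "b = B")
      case True then show ?thesis using b bs by simp
    next
      case False
      then have bb: "b \<in> set bt" using b bs by simp
      have "b = hd b # tl b" using bne b by simp
      then have "x = hd b \<or> x \<in> set (tl b)" using b(2) by (metis set_ConsD)
      then show ?thesis using bb bs by auto
    qed
  qed
  have pos: "pos_word (concat bs)"
    using sub tw_set[OF P4] assms(3) unfolding pos_word_def by blast
  show ?thesis
    by (rule exI[of _ bs], intro conjI, fact P1, fact pos, fact P2, fact P3, fact P4)
qed

end
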